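(* Let $X$ be a Tychonoff space with $|X|>1$. The following are equivalent: (a) $X$ has an isolated point; (b) $\mathbb{R}$ is a direct summand of $C(X)$ (as a ring); (c) $\mathbb{AG}(X)$ has a leaf vertex; (d) $\mathbb{AG}(X)$ is not triangulated.
   Context: $C(X)$ is the ring of real-valued continuous functions on $X$. $\mathbb{A}(X)$ is the set of nonzero ideals $I$ of $C(X)$ for which there is a nonzero ideal $J$ with $IJ=\{0\}$; $\mathbb{AG}(X)$ has vertex set $\mathbb{A}(X)$, distinct $I,J$ adjacent iff $IJ=\{0\}$. A leaf vertex is a vertex adjacent to exactly one vertex. A graph is triangulated if every vertex lies on some triangle (3-cycle). *)

theory Defs
  imports "HOL-Analysis.Analysis" "HOL-Algebra.Ideal_Product" "HOL-Algebra.Chinese_Remainder"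
begin

text \<open>The ring C(X) of real-valued continuous functions on X, with pointwise operations.
  Functions are taken extensional (value undefined outside topspace X) so that equality is
  equality on X.\<close>
definition CX :: "'a topology \<Rightarrow> ('a \<Rightarrow> real) ring" where
  "CX X = \<lparr> carrier = {f. continuous_map X euclideanreal f \<and> f \<in> extensional (topspace X)},
            mult = (\<lambda>f g. restrict (\<lambda>x. f x * g x) (topspace X)),
            one = restrict (\<lambda>x. 1) (topspace X),
            zero = restrict (\<lambda>x. 0) (topspace X),
            add = (\<lambda>f g. restrict (\<lambda>x. f x + g x) (topspace X)) \<rparr>"

definition real_ring :: "real ring" where
  "real_ring = \<lparr> carrier = UNIV, mult = (*), one = 1, zero = 0, add = (+) \<rparr>"

definition tychonoff_space :: "'a topology \<Rightarrow> bool" where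
  "tychonoff_space X \<longleftrightarrow> completely_regular_space X \<and> Hausdorff_space X"

definition AX :: "'a topology \<Rightarrow> ('a \<Rightarrow> real) set set" where
  "AX X = {I. ideal I (CX X) \<and> I \<noteq> {\<zero>\<^bsub>CX X\<^esub>} \<and>
              (\<exists>J. ideal J (CX X) \<and> J \<noteq> {\<zero>\<^bsub>CX X\<^esub>} \<and> I \<cdot>\<^bsub>CX X\<^esub> J = {\<zero>\<^bsub>CX X\<^esub>})}"

definition AG_adj :: "'a topology \<Rightarrow> ('a \<Rightarrow> real) set \<Rightarrow> ('a \<Rightarrow> real) set \<Rightarrow> bool" where
  "AG_adj X I J \<longleftrightarrow> I \<in> AX X \<and> J \<in> AX X \<and> I \<noteq> J \<and> I \<cdot>\<^bsub>CX X\<^esub> J = {\<zero>\<^bsub>CX X\<^esub>}"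

definition AG_has_leaf :: "'a topology \<Rightarrow> bool" where
  "AG_has_leaf X \<longleftrightarrow> (\<exists>I \<in> AX X. \<exists>!J. AG_adj X I J)"

definition AG_triangulated :: "'a topology \<Rightarrow> bool" where
  "AG_triangulated X \<longleftrightarrow>
     (\<forall>I \<in> AX X. \<exists>J K. AG_adj X I J \<and> AG_adj X J K \<and> AG_adj X K I)"

end

theory Submission imports Defs begin

lemma CX_simps:
  "carrier (CX X) = {f. continuous_map X euclideanreal f \<and> f \<in> extensional (topspace X)}"
  "f \<otimes>\<^bsub>CX X\<^esub> g = restrict (\<lambda>x. f x * g x) (topspace X)"
  "f \<oplus>\<^bsub>CX X\<^esub> g = restrict (\<lambda>x. f x + g x) (topspace X)"
  "\<one>\<^bsub>CX X\<^esub> = restrict (\<lambda>x. 1) (topspace X)"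
  "\<zero>\<^bsub>CX X\<^esub> = restrict (\<lambda>x. 0) (topspace X)"
  by (simp_all add: CX_def)

lemma CX_carrier_iff: "f \<in> carrier (CX X) \<longleftrightarrow> continuous_map X euclideanreal f \<and> f \<in> extensional (topspace X)"
  by (simp add: CX_def)

lemma cont_restrict: "continuous_map X euclideanreal f \<Longrightarrow> restrict f (topspace X) \<in> carrier (CX X)"
  unfolding CX_carrier_iff by (auto intro: continuous_map_eq)

lemma restrict_eq_iff_on: "f \<in> extensional A \<Longrightarrow> (f = restrict g A) \<longleftrightarrow> (\<forall>x\<in>A. f x = g x)"
  by (auto simp: extensional_def fun_eq_iff)

lemma CX_eqI: "f \<in> carrier (CX X) \<Longrightarrow> g \<in> carrier (CX X) \<Longrightarrow> (\<And>x. x \<in> topspace X \<Longrightarrow> f x = g x) \<Longrightarrow> f = g"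
  unfolding CX_carrier_iff by (meson extensionalityI)

lemma CX_mult_closed: "f \<in> carrier (CX X) \<Longrightarrow> g \<in> carrier (CX X) \<Longrightarrow> restrict (\<lambda>x. f x * g x) (topspace X) \<in> carrier (CX X)"
  by (intro cont_restrict continuous_map_real_mult) (auto simp: CX_carrier_iff)

lemma CX_add_closed: "f \<in> carrier (CX X) \<Longrightarrow> g \<in> carrier (CX X) \<Longrightarrow> restrict (\<lambda>x. f x + g x) (topspace X) \<in> carrier (CX X)"
  by (intro cont_restrict continuous_map_add) (auto simp: CX_carrier_iff)

lemma CX_const: "restrict (\<lambda>x. c) (topspace X) \<in> carrier (CX X)"
  by (intro cont_restrict) simp

lemma CX_cring: "cring (CX X)"
proof (rule cringI)
  show "abelian_group (CX X)"
  proof (rule abelian_groupI)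
    fix f assume f: "f \<in> carrier (CX X)"
    have "restrict (\<lambda>x. - f x) (topspace X) \<in> carrier (CX X)"
      using f by (intro cont_restrict continuous_map_minus) (auto simp: CX_carrier_iff)
    moreover have "restrict (\<lambda>x. - f x) (topspace X) \<oplus>\<^bsub>CX X\<^esub> f = \<zero>\<^bsub>CX X\<^esub>"
      by (auto simp: CX_simps)
    ultimately show "\<exists>y\<in>carrier (CX X). y \<oplus>\<^bsub>CX X\<^esub> f = \<zero>\<^bsub>CX X\<^esub>" by blast
  next
    fix f assume f: "f \<in> carrier (CX X)"
    then show "\<zero>\<^bsub>CX X\<^esub> \<oplus>\<^bsub>CX X\<^esub> f = f"
      by (auto simp: CX_simps CX_carrier_iff extensional_def fun_eq_iff)
  qed (auto simp: CX_simps CX_add_closed[unfolded CX_simps] CX_const[unfolded CX_simps] add_ac intro: continuous_map_add)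
  show "comm_monoid (CX X)"
  proof (rule comm_monoidI)
    fix f assume f: "f \<in> carrier (CX X)"
    then show "\<one>\<^bsub>CX X\<^esub> \<otimes>\<^bsub>CX X\<^esub> f = f"
      by (auto simp: CX_simps CX_carrier_iff extensional_def fun_eq_iff)
  qed (auto simp: CX_simps CX_mult_closed[unfolded CX_simps] CX_const[unfolded CX_simps] mult_ac intro: continuous_map_real_mult)
  fix f g h assume "f \<in> carrier (CX X)" "g \<in> carrier (CX X)" "h \<in> carrier (CX X)"
  show "(f \<oplus>\<^bsub>CX X\<^esub> g) \<otimes>\<^bsub>CX X\<^esub> h = f \<otimes>\<^bsub>CX X\<^esub> h \<oplus>\<^bsub>CX X\<^esub> g \<otimes>\<^bsub>CX X\<^esub> h"
    by (auto simp: CX_simps distrib_right)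
qed

lemma CX_zero_ne: "f \<in> carrier (CX X) \<Longrightarrow> x \<in> topspace X \<Longrightarrow> f x \<noteq> 0 \<Longrightarrow> f \<noteq> \<zero>\<^bsub>CX X\<^esub>"
  by (auto simp: CX_simps)

lemma CX_nonzero_point: "f \<in> carrier (CX X) \<Longrightarrow> f \<noteq> \<zero>\<^bsub>CX X\<^esub> \<Longrightarrow> \<exists>x\<in>topspace X. f x \<noteq> 0"
  using CX_eqI[of f X "\<zero>\<^bsub>CX X\<^esub>"] CX_const[of 0 X] by (auto simp: CX_simps)

lemma CX_ideal_carr: "ideal I (CX X) \<Longrightarrow> f \<in> I \<Longrightarrow> f \<in> carrier (CX X)"
  by (meson ideal.Icarr)

lemma CX_ideal_zero: "ideal I (CX X) \<Longrightarrow> \<zero>\<^bsub>CX X\<^esub> \<in> I"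
  by (simp add: additive_subgroup.zero_closed ideal.axioms(1))

lemma CX_prod_zero:
  assumes I: "ideal I (CX X)" and J: "ideal J (CX X)"
  shows "(I \<cdot>\<^bsub>CX X\<^esub> J = {\<zero>\<^bsub>CX X\<^esub>}) \<longleftrightarrow> (\<forall>a\<in>I. \<forall>b\<in>J. \<forall>x\<in>topspace X. a x * b x = 0)"
proof
  assume h: "I \<cdot>\<^bsub>CX X\<^esub> J = {\<zero>\<^bsub>CX X\<^esub>}"
  show "\<forall>a\<in>I. \<forall>b\<in>J. \<forall>x\<in>topspace X. a x * b x = 0"
  proof (intro ballI)
    fix a b x assume "a \<in> I" "b \<in> J" "x \<in> topspace X"
    then have "a \<otimes>\<^bsub>CX X\<^esub> b \<in> I \<cdot>\<^bsub>CX X\<^esub> J" by (intro ideal_prod.prod)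
    then have "a \<otimes>\<^bsub>CX X\<^esub> b = \<zero>\<^bsub>CX X\<^esub>" using h by blast
    then have "(a \<otimes>\<^bsub>CX X\<^esub> b) x = 0" using \<open>x \<in> topspace X\<close> by (simp add: CX_simps)
    then show "a x * b x = 0" using \<open>x \<in> topspace X\<close> by (simp add: CX_simps)
  qed
next
  assume h: "\<forall>a\<in>I. \<forall>b\<in>J. \<forall>x\<in>topspace X. a x * b x = 0"
  show "I \<cdot>\<^bsub>CX X\<^esub> J = {\<zero>\<^bsub>CX X\<^esub>}"
  proof
    show "I \<cdot>\<^bsub>CX X\<^esub> J \<subseteq> {\<zero>\<^bsub>CX X\<^esub>}"
    proof
      fix s assume "s \<in> I \<cdot>\<^bsub>CX X\<^esub> J"
      then have "s = \<zero>\<^bsub>CX X\<^esub>"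
      proof (induct s rule: ideal_prod.induct)
        case (prod i j)
        then show ?case using h by (auto simp: CX_simps fun_eq_iff)
      next
        case (sum s1 s2)
        then show ?case by (auto simp: CX_simps fun_eq_iff)
      qed
      then show "s \<in> {\<zero>\<^bsub>CX X\<^esub>}" by simp
    qed
    have "\<zero>\<^bsub>CX X\<^esub> \<otimes>\<^bsub>CX X\<^esub> \<zero>\<^bsub>CX X\<^esub> \<in> I \<cdot>\<^bsub>CX X\<^esub> J"
      by (rule ideal_prod.prod) (auto intro: CX_ideal_zero I J)
    moreover have "\<zero>\<^bsub>CX X\<^esub> \<otimes>\<^bsub>CX X\<^esub> \<zero>\<^bsub>CX X\<^esub> = \<zero>\<^bsub>CX X\<^esub>"
      by (auto simp: CX_simps fun_eq_iff)
    ultimately show "{\<zero>\<^bsub>CX X\<^esub>} \<subseteq> I \<cdot>\<^bsub>CX X\<^esub> J" by simp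
  qed
qed

lemma CX_prod_comm:
  "ideal I (CX X) \<Longrightarrow> ideal J (CX X) \<Longrightarrow> (I \<cdot>\<^bsub>CX X\<^esub> J = {\<zero>\<^bsub>CX X\<^esub>}) \<longleftrightarrow> (J \<cdot>\<^bsub>CX X\<^esub> I = {\<zero>\<^bsub>CX X\<^esub>})"
proof -
  assume I: "ideal I (CX X)" and J: "ideal J (CX X)"
  have "(\<forall>a\<in>I. \<forall>b\<in>J. \<forall>x\<in>topspace X. a x * b x = 0) \<longleftrightarrow> (\<forall>b\<in>J. \<forall>a\<in>I. \<forall>x\<in>topspace X. b x * a x = 0)"
    by (metis mult.commute)
  then show ?thesis by (simp only: CX_prod_zero[OF I J] CX_prod_zero[OF J I])
qed

lemma AG_adj_sym: "AG_adj X I J \<Longrightarrow> AG_adj X J I"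
proof -
  assume h: "AG_adj X I J"
  then have IA: "I \<in> AX X" and JA: "J \<in> AX X" and ne: "I \<noteq> J" and p: "I \<cdot>\<^bsub>CX X\<^esub> J = {\<zero>\<^bsub>CX X\<^esub>}"
    by (simp_all add: AG_adj_def)
  have "ideal I (CX X)" "ideal J (CX X)" using IA JA by (simp_all add: AX_def)
  then have "J \<cdot>\<^bsub>CX X\<^esub> I = {\<zero>\<^bsub>CX X\<^esub>}" using p CX_prod_comm by metis
  then show ?thesis using IA JA ne by (simp add: AG_adj_def)
qed

lemma PIdl_ideal: "h \<in> carrier (CX X) \<Longrightarrow> ideal (cgenideal (CX X) h) (CX X)"
  by (rule cring.cgenideal_ideal[OF CX_cring])

lemma PIdl_self: "h \<in> carrier (CX X) \<Longrightarrow> h \<in> cgenideal (CX X) h"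
  by (rule ring.cgenideal_self[OF cring.axioms(1)[OF CX_cring]])

lemma PIdl_vanish: "y \<in> cgenideal (CX X) h \<Longrightarrow> x \<in> topspace X \<Longrightarrow> h x = 0 \<Longrightarrow> y x = 0"
  unfolding cgenideal_def by (auto simp: CX_simps)

lemma bump:
  assumes "completely_regular_space X" "openin X V" "p \<in> V"
  shows "\<exists>h\<in>carrier (CX X). h p = 1 \<and> (\<forall>x\<in>topspace X. x \<notin> V \<longrightarrow> h x = 0)"
proof -
  obtain f where f: "continuous_map X euclideanreal f" "f p = 0" "f ` (topspace X - V) \<subseteq> {1}"
  proof -
    have "\<forall>S x. openin X S \<longrightarrow> x \<in> S \<longrightarrow> (\<exists>f. continuous_map X euclideanreal f \<and> f x = 0 \<and> f ` (topspace X - S) \<subseteq> {1})"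
      using assms(1) by (simp only: completely_regular_space_alt')
    from this[rule_format, OF assms(2,3)] show ?thesis using that by blast
  qed
  define h where "h = restrict (\<lambda>x. 1 - f x) (topspace X)"
  have "h \<in> carrier (CX X)" unfolding h_def
    by (intro cont_restrict continuous_map_diff f) simp
  moreover have "p \<in> topspace X" using assms openin_subset by blast
  moreover have "h p = 1" using f(2) \<open>p \<in> topspace X\<close> by (simp add: h_def)
  moreover have "\<forall>x\<in>topspace X. x \<notin> V \<longrightarrow> h x = 0"
  proof (intro ballI impI)
    fix x assume x: "x \<in> topspace X" "x \<notin> V"
    then have "f x \<in> {1}" using f(3) by blast
    then show "h x = 0" using x by (simp add: h_def)
  qed
  ultimately show ?thesis by blast
qed

lemma no_iso_triangulated:
  assumes tych: "tychonoff_space X" and noiso: "\<forall>x\<in>topspace X. \<not> openin X {x}"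
  shows "AG_triangulated X"
  unfolding AG_triangulated_def
proof
  have Haus: "Hausdorff_space X" and creg: "completely_regular_space X"
    using tych by (auto simp: tychonoff_space_def)
  fix I assume I: "I \<in> AX X"
  then obtain J where Iid: "ideal I (CX X)" and Inz: "I \<noteq> {\<zero>\<^bsub>CX X\<^esub>}" and Jid: "ideal J (CX X)"
     and Jnz: "J \<noteq> {\<zero>\<^bsub>CX X\<^esub>}" and IJ: "I \<cdot>\<^bsub>CX X\<^esub> J = {\<zero>\<^bsub>CX X\<^esub>}"
    by (auto simp: AX_def)
  obtain g where gJ: "g \<in> J" and gnz: "g \<noteq> \<zero>\<^bsub>CX X\<^esub>"
    using Jnz CX_ideal_zero[OF Jid] by blast
  have gc: "g \<in> carrier (CX X)" using CX_ideal_carr[OF Jid gJ] .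
  obtain p where p: "p \<in> topspace X" "g p \<noteq> 0" using CX_nonzero_point[OF gc gnz] by blast
  define U where "U = {x \<in> topspace X. g x \<in> - {0}}"
  have Uo: "openin X U" unfolding U_def
    by (rule openin_continuous_map_preimage) (use gc in \<open>auto simp: CX_carrier_iff open_Compl\<close>)
  have pU: "p \<in> U" using p by (simp add: U_def)
  have Ivan: "\<forall>f\<in>I. \<forall>x\<in>U. f x = 0"
  proof (intro ballI)
    fix f x assume "f \<in> I" "x \<in> U"
    then have "f x * g x = 0" "g x \<noteq> 0" "x \<in> topspace X"
      using IJ gJ unfolding CX_prod_zero[OF Iid Jid] U_def by auto
    then show "f x = 0" by simp
  qed
  obtain q where qU: "q \<in> U" and qp: "q \<noteq> p"
  proof -
    have "U \<noteq> {p}" using noiso p Uo by auto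
    then show ?thesis using that pU by blast
  qed
  have q: "q \<in> topspace X" using qU by (simp add: U_def)
  obtain U1 U2 where U12: "openin X U1" "openin X U2" "p \<in> U1" "q \<in> U2" "disjnt U1 U2"
  proof -
    have "\<exists>U V. openin X U \<and> openin X V \<and> p \<in> U \<and> q \<in> V \<and> disjnt U V"
      using Haus p(1) q qp unfolding Hausdorff_space_def by blast
    then show ?thesis using that by blast
  qed
  obtain h1 where h1: "h1 \<in> carrier (CX X)" "h1 p = 1" "\<forall>x\<in>topspace X. x \<notin> U \<inter> U1 \<longrightarrow> h1 x = 0"
    using bump[OF creg, of "U \<inter> U1" p] Uo U12 pU by blast
  obtain h2 where h2: "h2 \<in> carrier (CX X)" "h2 q = 1" "\<forall>x\<in>topspace X. x \<notin> U \<inter> U2 \<longrightarrow> h2 x = 0"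
    using bump[OF creg, of "U \<inter> U2" q] Uo U12 qU by blast
  define J' where "J' = cgenideal (CX X) h1"
  define K' where "K' = cgenideal (CX X) h2"
  have J'id: "ideal J' (CX X)" and K'id: "ideal K' (CX X)"
    using PIdl_ideal h1 h2 by (auto simp: J'_def K'_def)
  have h1J: "h1 \<in> J'" and h2K: "h2 \<in> K'" using PIdl_self h1 h2 by (auto simp: J'_def K'_def)
  have J'van: "\<forall>y\<in>J'. \<forall>x\<in>topspace X. x \<notin> U \<inter> U1 \<longrightarrow> y x = 0"
  proof (intro ballI impI)
    fix y x assume "y \<in> J'" "x \<in> topspace X" "x \<notin> U \<inter> U1"
    then show "y x = 0" using PIdl_vanish[of y X h1 x] h1(3) unfolding J'_def by simp
  qed
  have K'van: "\<forall>y\<in>K'. \<forall>x\<in>topspace X. x \<notin> U \<inter> U2 \<longrightarrow> y x = 0"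
  proof (intro ballI impI)
    fix y x assume "y \<in> K'" "x \<in> topspace X" "x \<notin> U \<inter> U2"
    then show "y x = 0" using PIdl_vanish[of y X h2 x] h2(3) unfolding K'_def by simp
  qed
  have J'nz: "J' \<noteq> {\<zero>\<^bsub>CX X\<^esub>}" using h1J CX_zero_ne[OF h1(1) p(1)] h1(2) by auto
  have K'nz: "K' \<noteq> {\<zero>\<^bsub>CX X\<^esub>}" using h2K CX_zero_ne[OF h2(1) q] h2(2) by auto
  have JK: "J' \<cdot>\<^bsub>CX X\<^esub> K' = {\<zero>\<^bsub>CX X\<^esub>}"
    unfolding CX_prod_zero[OF J'id K'id]
  proof (intro ballI)
    fix a b x assume "a \<in> J'" "b \<in> K'" "x \<in> topspace X"
    show "a x * b x = 0"
    proof (cases "x \<in> U \<inter> U1")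
      case True
      then have "x \<notin> U \<inter> U2" using U12(5) by (auto simp: disjnt_def)
      then have "b x = 0" using K'van \<open>b \<in> K'\<close> \<open>x \<in> topspace X\<close> by blast
      then show ?thesis by simp
    next
      case False
      then have "a x = 0" using J'van \<open>a \<in> J'\<close> \<open>x \<in> topspace X\<close> by blast
      then show ?thesis by simp
    qed
  qed
  have IJ': "I \<cdot>\<^bsub>CX X\<^esub> J' = {\<zero>\<^bsub>CX X\<^esub>}"
    unfolding CX_prod_zero[OF Iid J'id]
  proof (intro ballI)
    fix a b x assume ab: "a \<in> I" "b \<in> J'" "x \<in> topspace X"
    show "a x * b x = 0"
    proof (cases "x \<in> U")
      case True
      then have "a x = 0" using Ivan ab by blast
      then show ?thesis by simp
    next
      case False
      then have "b x = 0" using J'van ab by blast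
      then show ?thesis by simp
    qed
  qed
  have IK': "I \<cdot>\<^bsub>CX X\<^esub> K' = {\<zero>\<^bsub>CX X\<^esub>}"
    unfolding CX_prod_zero[OF Iid K'id]
  proof (intro ballI)
    fix a b x assume ab: "a \<in> I" "b \<in> K'" "x \<in> topspace X"
    show "a x * b x = 0"
    proof (cases "x \<in> U")
      case True
      then have "a x = 0" using Ivan ab by blast
      then show ?thesis by simp
    next
      case False
      then have "b x = 0" using K'van ab by blast
      then show ?thesis by simp
    qed
  qed
  have J'AX: "J' \<in> AX X" unfolding AX_def using J'id J'nz K'id K'nz JK by blast
  have K'AX: "K' \<in> AX X" unfolding AX_def using J'id J'nz K'id K'nz JK CX_prod_comm[OF J'id K'id] by blast
  have "h1 \<notin> I"
  proof
    assume "h1 \<in> I" then have "h1 p = 0" using Ivan pU by blast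
    then show False using h1(2) by simp
  qed
  then have IJne: "I \<noteq> J'" using h1J by blast
  have "h2 \<notin> I"
  proof
    assume "h2 \<in> I" then have "h2 q = 0" using Ivan qU by blast
    then show False using h2(2) by simp
  qed
  then have IKne: "I \<noteq> K'" using h2K by blast
  have "p \<notin> U \<inter> U2" using U12(3,5) by (auto simp: disjnt_def)
  then have "h1 \<notin> K'" using K'van p(1) h1(2) by (metis zero_neq_one)
  then have JKne: "J' \<noteq> K'" using h1J by blast
  have "AG_adj X I J'" unfolding AG_adj_def using I J'AX IJne IJ' by blast
  moreover have "AG_adj X J' K'" unfolding AG_adj_def using J'AX K'AX JKne JK by blast
  moreover have "AG_adj X K' I" unfolding AG_adj_def using I K'AX IKne IK' CX_prod_comm[OF Iid K'id] by blast
  ultimately show "\<exists>J K. AG_adj X I J \<and> AG_adj X J K \<and> AG_adj X K I" by blast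
qed

lemma CX_mult_closed': "f \<in> carrier (CX X) \<Longrightarrow> g \<in> carrier (CX X) \<Longrightarrow> f \<otimes>\<^bsub>CX X\<^esub> g \<in> carrier (CX X)"
  unfolding CX_simps(2) by (rule CX_mult_closed)

lemma paste_point:
  assumes cl: "closedin X {x}" and op: "openin X {x}"
    and g: "continuous_map (subtopology X (topspace X - {x})) euclideanreal g"
  shows "continuous_map X euclideanreal (\<lambda>y. if y = x then c else g y)"
proof -
  have c1: "X closure_of {y. y = x} = {x}" using cl by (simp add: closure_of_closedin)
  have cl2: "closedin X (topspace X - {x})" using closedin_diff[OF closedin_topspace op] .
  have "X closure_of {y. y \<noteq> x} = X closure_of (topspace X - {x})"
    by (subst closure_of_restrict) (simp add: Diff_eq Int_commute Compl_eq)
  also have "\<dots> = topspace X - {x}" using cl2 by (simp add: closure_of_closedin)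
  finally have c2: "X closure_of {y. y \<noteq> x} = topspace X - {x}" .
  have fr: "X frontier_of {y. y = x} = {}"
    using c1 op by (simp add: frontier_of_def interior_of_openin)
  show ?thesis
    by (rule continuous_map_cases) (use c2 g fr in auto)
qed

lemma iso_point_facts:
  assumes tych: "tychonoff_space X" and x: "x \<in> topspace X" and op: "openin X {x}"
    and y: "y \<in> topspace X" "y \<noteq> x"
  shows "AG_has_leaf X \<and> \<not> AG_triangulated X"
proof -
  have "t1_space X" using tych by (simp add: tychonoff_space_def Hausdorff_imp_t1_space)
  then have cl: "closedin X {x}" using x by (simp add: t1_space_closedin_singleton)
  define e where "e = restrict (\<lambda>z. if z = x then 1 else 0::real) (topspace X)"
  define e' where "e' = restrict (\<lambda>z. if z = x then 0 else 1::real) (topspace X)"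
  have ec: "e \<in> carrier (CX X)" unfolding e_def
    by (rule cont_restrict, rule paste_point[OF cl op]) simp
  have e'c: "e' \<in> carrier (CX X)" unfolding e'_def
    by (rule cont_restrict, rule paste_point[OF cl op]) simp
  define M where "M = cgenideal (CX X) e'"
  define I0 where "I0 = cgenideal (CX X) e"
  have Mid: "ideal M (CX X)" and I0id: "ideal I0 (CX X)"
    using PIdl_ideal ec e'c by (auto simp: M_def I0_def)
  have e'M: "e' \<in> M" and eI0: "e \<in> I0" using PIdl_self ec e'c by (auto simp: M_def I0_def)
  have Mvan: "\<forall>f\<in>M. f x = 0"
  proof
    fix f assume "f \<in> M"
    then show "f x = 0" using PIdl_vanish[of f X e' x] x unfolding M_def by (simp add: e'_def)
  qed
  have I0van: "\<forall>f\<in>I0. \<forall>z\<in>topspace X. z \<noteq> x \<longrightarrow> f z = 0"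
  proof (intro ballI impI)
    fix f z assume "f \<in> I0" "z \<in> topspace X" "z \<noteq> x"
    then show "f z = 0" using PIdl_vanish[of f X e z] unfolding I0_def by (simp add: e_def)
  qed
  have MI0: "M \<cdot>\<^bsub>CX X\<^esub> I0 = {\<zero>\<^bsub>CX X\<^esub>}"
    unfolding CX_prod_zero[OF Mid I0id]
  proof (intro ballI)
    fix a b z assume ab: "a \<in> M" "b \<in> I0" "z \<in> topspace X"
    show "a z * b z = 0"
    proof (cases "z = x")
      case True
      then show ?thesis using Mvan ab by simp
    next
      case False
      then have "b z = 0" using I0van ab by blast
      then show ?thesis by simp
    qed
  qed
  have "e' y \<noteq> 0" using y by (simp add: e'_def)
  then have Mnz: "M \<noteq> {\<zero>\<^bsub>CX X\<^esub>}" using e'M CX_zero_ne[OF e'c y(1)] by auto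
  have "e x \<noteq> 0" using x by (simp add: e_def)
  then have I0nz: "I0 \<noteq> {\<zero>\<^bsub>CX X\<^esub>}" using eI0 CX_zero_ne[OF ec x] by auto
  have MAX: "M \<in> AX X" unfolding AX_def using Mid Mnz I0id I0nz MI0 by blast
  have I0M: "I0 \<cdot>\<^bsub>CX X\<^esub> M = {\<zero>\<^bsub>CX X\<^esub>}" using MI0 CX_prod_comm[OF Mid I0id] by simp
  have I0AX: "I0 \<in> AX X" unfolding AX_def using Mid Mnz I0id I0nz I0M by blast
  have "e' \<notin> I0"
  proof
    assume "e' \<in> I0" then have "e' y = 0" using I0van y by blast
    then show False using \<open>e' y \<noteq> 0\<close> by simp
  qed
  then have MI0ne: "M \<noteq> I0" using e'M by blast
  have adj: "AG_adj X M I0" unfolding AG_adj_def using MAX I0AX MI0ne MI0 by blast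
  have uniq: "J = I0" if JJ: "AG_adj X M J" for J
  proof -
    have JA: "J \<in> AX X" and MJ: "M \<cdot>\<^bsub>CX X\<^esub> J = {\<zero>\<^bsub>CX X\<^esub>}" using JJ by (simp_all add: AG_adj_def)
    have Jid: "ideal J (CX X)" and Jnz: "J \<noteq> {\<zero>\<^bsub>CX X\<^esub>}" using JA by (simp_all add: AX_def)
    have Jvan: "\<forall>g\<in>J. \<forall>z\<in>topspace X. z \<noteq> x \<longrightarrow> g z = 0"
    proof (intro ballI impI)
      fix g z assume gz: "g \<in> J" "z \<in> topspace X" "z \<noteq> x"
      then have "e' z * g z = 0" using MJ e'M unfolding CX_prod_zero[OF Mid Jid] by blast
      moreover have "e' z = 1" using gz by (simp add: e'_def)
      ultimately show "g z = 0" by simp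
    qed
    show "J = I0"
    proof
      show "J \<subseteq> I0"
      proof
        fix g assume gJ: "g \<in> J"
        have gc: "g \<in> carrier (CX X)" using CX_ideal_carr[OF Jid gJ] .
        have "g = g \<otimes>\<^bsub>CX X\<^esub> e"
        proof (rule CX_eqI[OF gc CX_mult_closed'[OF gc ec]])
          fix z assume z: "z \<in> topspace X"
          show "g z = (g \<otimes>\<^bsub>CX X\<^esub> e) z"
          proof (cases "z = x")
            case True then show ?thesis using z by (simp add: CX_simps e_def)
          next
            case False
            then have "g z = 0" using Jvan gJ z by blast
            then show ?thesis using z False by (simp add: CX_simps e_def)
          qed
        qed
        then show "g \<in> I0" unfolding I0_def cgenideal_def using gc by blast
      qed
      show "I0 \<subseteq> J"
      proof
        fix f assume fI: "f \<in> I0"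
        obtain g where gJ: "g \<in> J" and gnz: "g \<noteq> \<zero>\<^bsub>CX X\<^esub>"
          using Jnz CX_ideal_zero[OF Jid] by blast
        have gc: "g \<in> carrier (CX X)" using CX_ideal_carr[OF Jid gJ] .
        obtain z where z: "z \<in> topspace X" "g z \<noteq> 0" using CX_nonzero_point[OF gc gnz] by blast
        have "z = x" using Jvan gJ z by blast
        then have gx: "g x \<noteq> 0" using z by simp
        have fc: "f \<in> carrier (CX X)" using CX_ideal_carr[OF I0id fI] .
        define c where "c = restrict (\<lambda>_. f x / g x) (topspace X)"
        have cc: "c \<in> carrier (CX X)" unfolding c_def by (rule CX_const)
        have cgJ: "c \<otimes>\<^bsub>CX X\<^esub> g \<in> J" using ideal.I_l_closed[OF Jid gJ cc] .
        have "c \<otimes>\<^bsub>CX X\<^esub> g = f"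
        proof (rule CX_eqI[OF CX_mult_closed'[OF cc gc] fc])
          fix w assume w: "w \<in> topspace X"
          show "(c \<otimes>\<^bsub>CX X\<^esub> g) w = f w"
          proof (cases "w = x")
            case True then show ?thesis using w gx by (simp add: CX_simps c_def)
          next
            case False
            then have "g w = 0" "f w = 0" using Jvan gJ w I0van fI by blast+
            then show ?thesis using w by (simp add: CX_simps c_def)
          qed
        qed
        then show "f \<in> J" using cgJ by simp
      qed
    qed
  qed
  have leaf: "AG_has_leaf X"
    unfolding AG_has_leaf_def
  proof (rule bexI[OF _ MAX])
    show "\<exists>!J. AG_adj X M J" using adj uniq by (intro ex1I[of _ I0])
  qed
  have "\<not> AG_triangulated X"
  proof
    assume "AG_triangulated X"
    then have "\<exists>J K. AG_adj X M J \<and> AG_adj X J K \<and> AG_adj X K M"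
      using MAX unfolding AG_triangulated_def by (rule bspec)
    then obtain J K where JK: "AG_adj X M J" "AG_adj X J K" "AG_adj X K M" by blast
    have "J = I0" using uniq JK(1) .
    moreover have "K = I0" using uniq AG_adj_sym[OF JK(3)] .
    moreover have "J \<noteq> K" using JK(2) by (simp add: AG_adj_def)
    ultimately show False by simp
  qed
  with leaf show ?thesis by blast
qed

lemma real_ring_ring: "ring real_ring"
proof (rule ringI)
  show "abelian_group real_ring"
  proof (rule abelian_groupI)
    fix x assume "x \<in> carrier real_ring"
    show "\<exists>y\<in>carrier real_ring. y \<oplus>\<^bsub>real_ring\<^esub> x = \<zero>\<^bsub>real_ring\<^esub>"
      by (rule bexI[of _ "- x"]) (simp_all add: real_ring_def)
  qed (auto simp: real_ring_def)
  show "monoid real_ring" by (rule monoidI) (auto simp: real_ring_def)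
qed (auto simp: real_ring_def distrib_left distrib_right)

lemma RDP_mult: "(a, s) \<otimes>\<^bsub>RDirProd R S\<^esub> (b, t) = (a \<otimes>\<^bsub>R\<^esub> b, s \<otimes>\<^bsub>S\<^esub> t)"
  by (simp add: RDirProd_def DirProd_def monoid.defs)

lemma RDP_add: "(a, s) \<oplus>\<^bsub>RDirProd R S\<^esub> (b, t) = (a \<oplus>\<^bsub>R\<^esub> b, s \<oplus>\<^bsub>S\<^esub> t)"
  by (simp add: RDirProd_def DirProd_def monoid.defs)

lemma RDP_one: "\<one>\<^bsub>RDirProd R S\<^esub> = (\<one>\<^bsub>R\<^esub>, \<one>\<^bsub>S\<^esub>)"
  by (simp add: RDirProd_def DirProd_def monoid.defs)

lemma RDP_zero: "\<zero>\<^bsub>RDirProd R S\<^esub> = (\<zero>\<^bsub>R\<^esub>, \<zero>\<^bsub>S\<^esub>)"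
  by (simp add: RDirProd_def DirProd_def monoid.defs)

lemma real_ring_simps: "carrier real_ring = UNIV" "a \<otimes>\<^bsub>real_ring\<^esub> b = a * b"
  "a \<oplus>\<^bsub>real_ring\<^esub> b = a + b" "\<one>\<^bsub>real_ring\<^esub> = 1" "\<zero>\<^bsub>real_ring\<^esub> = 0"
  by (simp_all add: real_ring_def)

lemma iso_summand:
  fixes X :: "'a topology"
  assumes tych: "tychonoff_space X" and x: "x \<in> topspace X" and op: "openin X {x}"
  shows "\<exists>S :: ('a \<Rightarrow> real) ring. ring S \<and> CX X \<simeq> RDirProd real_ring S"
proof -
  have "t1_space X" using tych by (simp add: tychonoff_space_def Hausdorff_imp_t1_space)
  then have cl: "closedin X {x}" using x by (simp add: t1_space_closedin_singleton)
  define A where "A = topspace X - {x}"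
  define S where "S = CX (subtopology X A)"
  have tA: "topspace (subtopology X A) = A" by (auto simp: A_def)
  define \<phi> where "\<phi> = (\<lambda>f::'a \<Rightarrow> real. (f x, restrict f A))"
  have carrP: "carrier (RDirProd real_ring S) = UNIV \<times> carrier S"
    by (simp add: RDirProd_carrier real_ring_simps)
  have into: "\<phi> f \<in> carrier (RDirProd real_ring S)" if f: "f \<in> carrier (CX X)" for f
  proof -
    have "continuous_map (subtopology X A) euclideanreal f"
      using f by (intro continuous_map_from_subtopology) (simp add: CX_carrier_iff)
    then have "restrict f (topspace (subtopology X A)) \<in> carrier S"
      unfolding S_def by (rule cont_restrict)
    then show ?thesis using tA by (simp add: carrP \<phi>_def)
  qed
  have "\<phi> \<in> ring_iso (CX X) (RDirProd real_ring S)"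
  proof (rule ring_iso_memI)
    fix f assume "f \<in> carrier (CX X)"
    then show "\<phi> f \<in> carrier (RDirProd real_ring S)" by (rule into)
  next
    fix f g assume "f \<in> carrier (CX X)" "g \<in> carrier (CX X)"
    show "\<phi> (f \<otimes>\<^bsub>CX X\<^esub> g) = \<phi> f \<otimes>\<^bsub>RDirProd real_ring S\<^esub> \<phi> g"
      unfolding \<phi>_def RDP_mult using x tA by (auto simp: S_def CX_simps real_ring_simps fun_eq_iff A_def)
  next
    fix f g assume "f \<in> carrier (CX X)" "g \<in> carrier (CX X)"
    show "\<phi> (f \<oplus>\<^bsub>CX X\<^esub> g) = \<phi> f \<oplus>\<^bsub>RDirProd real_ring S\<^esub> \<phi> g"
      unfolding \<phi>_def RDP_add using x tA by (auto simp: S_def CX_simps real_ring_simps fun_eq_iff A_def)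
  next
    show "\<phi> \<one>\<^bsub>CX X\<^esub> = \<one>\<^bsub>RDirProd real_ring S\<^esub>"
      unfolding \<phi>_def RDP_one using x tA by (auto simp: S_def CX_simps real_ring_simps fun_eq_iff A_def)
  next
    show "bij_betw \<phi> (carrier (CX X)) (carrier (RDirProd real_ring S))"
      unfolding bij_betw_def
    proof
      show "inj_on \<phi> (carrier (CX X))"
      proof (rule inj_onI)
        fix f g assume f: "f \<in> carrier (CX X)" and g: "g \<in> carrier (CX X)" and eq: "\<phi> f = \<phi> g"
        have fx: "f x = g x" and fA: "restrict f A = restrict g A" using eq by (simp_all add: \<phi>_def)
        show "f = g"
        proof (rule CX_eqI[OF f g])
          fix z assume z: "z \<in> topspace X"
          show "f z = g z"
          proof (cases "z = x")
            case True then show ?thesis using fx by simp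
          next
            case False
            then have "z \<in> A" using z by (simp add: A_def)
            then show ?thesis using fun_cong[OF fA, of z] by simp
          qed
        qed
      qed
      show "\<phi> ` carrier (CX X) = carrier (RDirProd real_ring S)"
      proof
        show "\<phi> ` carrier (CX X) \<subseteq> carrier (RDirProd real_ring S)" using into by blast
        show "carrier (RDirProd real_ring S) \<subseteq> \<phi> ` carrier (CX X)"
        proof
          fix b assume "b \<in> carrier (RDirProd real_ring S)"
          then obtain c s where b: "b = (c, s)" and s: "s \<in> carrier S" using carrP by auto
          have sc: "continuous_map (subtopology X (topspace X - {x})) euclideanreal s"
            and se: "s \<in> extensional A"
            using s tA by (simp_all add: S_def CX_carrier_iff A_def)
          define f where "f = restrict (\<lambda>z. if z = x then c else s z) (topspace X)"
          have fc: "f \<in> carrier (CX X)" unfolding f_def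
            by (rule cont_restrict, rule paste_point[OF cl op sc])
          have "restrict f A = s"
          proof
            fix z show "restrict f A z = s z"
            proof (cases "z \<in> A")
              case True then show ?thesis by (simp add: f_def A_def)
            next
              case False then show ?thesis using se by (simp add: extensional_def)
            qed
          qed
          then have "\<phi> f = b" using x b by (simp add: \<phi>_def f_def)
          then show "b \<in> \<phi> ` carrier (CX X)" using fc by blast
        qed
      qed
    qed
  qed
  moreover have "ring S" unfolding S_def by (rule cring.axioms(1)[OF CX_cring])
  ultimately show ?thesis unfolding is_ring_iso_def by blast
qed

lemma summand_iso:
  assumes tych: "tychonoff_space X" and S: "ring S"
    and phi: "\<phi> \<in> ring_iso (CX X) (RDirProd real_ring S)"
  shows "\<exists>p\<in>topspace X. openin X {p}"
proof -
  have Haus: "Hausdorff_space X" and creg: "completely_regular_space X"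
    using tych by (auto simp: tychonoff_space_def)
  have hom: "\<phi> \<in> ring_hom (CX X) (RDirProd real_ring S)"
    and bij: "bij_betw \<phi> (carrier (CX X)) (carrier (RDirProd real_ring S))"
    using phi by (simp_all add: ring_iso_def)
  have ringR: "ring (CX X)" by (rule cring.axioms(1)[OF CX_cring])
  have ringP: "ring (RDirProd real_ring S)" by (rule RDirProd_ring[OF real_ring_ring S])
  have carrP: "carrier (RDirProd real_ring S) = UNIV \<times> carrier S"
    by (simp add: RDirProd_carrier real_ring_simps)
  have zS: "\<zero>\<^bsub>S\<^esub> \<in> carrier S" using S by (simp add: ring.ring_simprules)
  have zz: "\<zero>\<^bsub>S\<^esub> \<otimes>\<^bsub>S\<^esub> \<zero>\<^bsub>S\<^esub> = \<zero>\<^bsub>S\<^esub>" using S zS by (simp add: ring.ring_simprules)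
  have phi0: "\<phi> \<zero>\<^bsub>CX X\<^esub> = (0, \<zero>\<^bsub>S\<^esub>)"
    using ring_hom_zero[OF hom ringR ringP] by (simp add: RDP_zero real_ring_simps)
  define \<psi> where "\<psi> = inv_into (carrier (CX X)) \<phi>"
  have img: "\<phi> ` carrier (CX X) = carrier (RDirProd real_ring S)" using bij by (simp add: bij_betw_def)
  have psic: "\<psi> b \<in> carrier (CX X)" and psi: "\<phi> (\<psi> b) = b"
    if "b \<in> carrier (RDirProd real_ring S)" for b
  proof -
    have "b \<in> \<phi> ` carrier (CX X)" using that img by simp
    then show "\<psi> b \<in> carrier (CX X)" "\<phi> (\<psi> b) = b"
      unfolding \<psi>_def by (rule inv_into_into, rule f_inv_into_f)
  qed
  have inj: "a = b" if "a \<in> carrier (CX X)" "b \<in> carrier (CX X)" "\<phi> a = \<phi> b" for a b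
    using bij that by (simp add: bij_betw_def inj_on_def)
  have hmul: "\<phi> (a \<otimes>\<^bsub>CX X\<^esub> b) = \<phi> a \<otimes>\<^bsub>RDirProd real_ring S\<^esub> \<phi> b"
    if "a \<in> carrier (CX X)" "b \<in> carrier (CX X)" for a b
    using ring_hom_mult[OF hom that] .
  have zc: "\<zero>\<^bsub>CX X\<^esub> \<in> carrier (CX X)" unfolding CX_simps(5) by (rule CX_const)
  define e where "e = \<psi> (1, \<zero>\<^bsub>S\<^esub>)"
  have ec: "e \<in> carrier (CX X)" and phie: "\<phi> e = (1, \<zero>\<^bsub>S\<^esub>)"
    using psic psi zS carrP unfolding e_def by auto
  have enz: "e \<noteq> \<zero>\<^bsub>CX X\<^esub>" using phie phi0 by auto
  have "\<phi> (e \<otimes>\<^bsub>CX X\<^esub> e) = \<phi> e"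
    using hmul[OF ec ec] phie zz by (simp add: RDP_mult real_ring_simps)
  then have eid: "e \<otimes>\<^bsub>CX X\<^esub> e = e" using inj CX_mult_closed'[OF ec ec] ec by blast
  have eval: "e z * e z = e z" if "z \<in> topspace X" for z
    using fun_cong[OF eid, of z] that by (simp add: CX_simps)
  obtain p where p: "p \<in> topspace X" "e p \<noteq> 0" using CX_nonzero_point[OF ec enz] by blast
  have ep: "e p = 1" using eval[OF p(1)] p(2) by simp
  have only: "q = p" if q: "q \<in> topspace X" "e q \<noteq> 0" for q
  proof (rule ccontr)
    assume qp: "q \<noteq> p"
    have eq: "e q = 1" using eval[OF q(1)] q(2) by simp
    have "t1_space X" using Haus by (simp add: Hausdorff_imp_t1_space)
    then have clp: "closedin X {p}" using p(1) by (simp add: t1_space_closedin_singleton)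
    have opn: "openin X (topspace X - {p})" by (rule openin_diff[OF openin_topspace clp])
    have qin: "q \<in> topspace X - {p}" using q qp by simp
    have "\<forall>S x. openin X S \<longrightarrow> x \<in> S \<longrightarrow> (\<exists>f. continuous_map X euclideanreal f \<and> f x = 0 \<and> f ` (topspace X - S) \<subseteq> {1})"
      using creg by (simp only: completely_regular_space_alt')
    from this[rule_format, OF opn qin] obtain f where
      f: "continuous_map X euclideanreal f" "f q = 0" "f ` (topspace X - (topspace X - {p})) \<subseteq> {1}"
      by blast
    have fp: "f p = 1" using f(3) p(1) by auto
    define F where "F = restrict f (topspace X)"
    have Fc: "F \<in> carrier (CX X)" unfolding F_def using f(1) by (rule cont_restrict)
    obtain a s where as: "\<phi> F = (a, s)" by (cases "\<phi> F")
    have s: "s \<in> carrier S" using ring_hom_closed[OF hom Fc] as carrP by auto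
    have eFc: "e \<otimes>\<^bsub>CX X\<^esub> F \<in> carrier (CX X)" using CX_mult_closed'[OF ec Fc] .
    have phieF: "\<phi> (e \<otimes>\<^bsub>CX X\<^esub> F) = (a, \<zero>\<^bsub>S\<^esub>)"
      using hmul[OF ec Fc] phie as S s by (simp add: RDP_mult real_ring_simps ring.ring_simprules)
    have "(e \<otimes>\<^bsub>CX X\<^esub> F) p = 1" using p(1) ep fp by (simp add: CX_simps F_def)
    then have "e \<otimes>\<^bsub>CX X\<^esub> F \<noteq> \<zero>\<^bsub>CX X\<^esub>" using CX_zero_ne[OF eFc p(1)] by simp
    then have anz: "a \<noteq> 0" using inj[OF eFc zc] phieF phi0 by auto
    define G where "G = \<psi> (1 / a, \<zero>\<^bsub>S\<^esub>)"
    have Gc: "G \<in> carrier (CX X)" and phiG: "\<phi> G = (1 / a, \<zero>\<^bsub>S\<^esub>)"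
      using psic psi zS carrP unfolding G_def by auto
    have "\<phi> ((e \<otimes>\<^bsub>CX X\<^esub> F) \<otimes>\<^bsub>CX X\<^esub> G) = \<phi> e"
      using hmul[OF eFc Gc] phieF phiG phie zz anz by (simp add: RDP_mult real_ring_simps)
    then have "(e \<otimes>\<^bsub>CX X\<^esub> F) \<otimes>\<^bsub>CX X\<^esub> G = e" using inj CX_mult_closed'[OF eFc Gc] ec by blast
    then have "((e \<otimes>\<^bsub>CX X\<^esub> F) \<otimes>\<^bsub>CX X\<^esub> G) q = e q" by simp
    then show False using q(1) eq f(2) by (simp add: CX_simps F_def)
  qed
  have eqp: "{z \<in> topspace X. e z \<in> - {0}} = {p}"
  proof
    show "{z \<in> topspace X. e z \<in> - {0}} \<subseteq> {p}"
    proof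
      fix z assume "z \<in> {z \<in> topspace X. e z \<in> - {0}}"
      then have "z \<in> topspace X" "e z \<noteq> 0" by simp_all
      then have "z = p" by (rule only)
      then show "z \<in> {p}" by simp
    qed
    show "{p} \<subseteq> {z \<in> topspace X. e z \<in> - {0}}" using p by simp
  qed
  have "openin X {z \<in> topspace X. e z \<in> - {0}}"
    by (rule openin_continuous_map_preimage) (use ec in \<open>auto simp: CX_carrier_iff open_Compl\<close>)
  then have "openin X {p}" by (simp only: eqp)
  then show ?thesis using p(1) by blast
qed

theorem mainTheorem15:
  fixes X :: "'a topology"
  assumes "tychonoff_space X"
    and "\<exists>x y. x \<in> topspace X \<and> y \<in> topspace X \<and> x \<noteq> y"
  shows "((\<exists>x \<in> topspace X. openin X {x})
            \<longleftrightarrow> (\<exists>S :: ('a \<Rightarrow> real) ring. ring S \<and> CX X \<simeq> RDirProd real_ring S))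
       \<and> ((\<exists>x \<in> topspace X. openin X {x}) \<longleftrightarrow> AG_has_leaf X)
       \<and> ((\<exists>x \<in> topspace X. openin X {x}) \<longleftrightarrow> \<not> AG_triangulated X)"
proof -
  note tych = assms(1)
  have isoB: "AG_has_leaf X \<and> \<not> AG_triangulated X" if iso: "\<exists>x \<in> topspace X. openin X {x}"
  proof -
    obtain x where x: "x \<in> topspace X" "openin X {x}" using iso by blast
    obtain y where y: "y \<in> topspace X" "y \<noteq> x" using assms(2) by metis
    show ?thesis by (rule iso_point_facts[OF tych x y])
  qed
  have tri: "AG_triangulated X" if niso: "\<not> (\<exists>x \<in> topspace X. openin X {x})"
    using no_iso_triangulated[OF tych] niso by blast
  have noleaf: "\<not> AG_has_leaf X" if T: "AG_triangulated X"
  proof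
    assume "AG_has_leaf X"
    then obtain I where IA: "I \<in> AX X" and u: "\<exists>!J. AG_adj X I J" by (auto simp: AG_has_leaf_def)
    have "\<exists>J K. AG_adj X I J \<and> AG_adj X J K \<and> AG_adj X K I"
      using T IA unfolding AG_triangulated_def by (rule bspec)
    then obtain J K where JK: "AG_adj X I J" "AG_adj X J K" "AG_adj X K I" by blast
    have "AG_adj X I K" by (rule AG_adj_sym[OF JK(3)])
    then have "J = K" using u JK(1) by blast
    moreover have "J \<noteq> K" using JK(2) by (simp add: AG_adj_def)
    ultimately show False by simp
  qed
  have A: "(\<exists>x \<in> topspace X. openin X {x})
            \<longleftrightarrow> (\<exists>S :: ('a \<Rightarrow> real) ring. ring S \<and> CX X \<simeq> RDirProd real_ring S)"
  proof
    assume "\<exists>x \<in> topspace X. openin X {x}"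
    then obtain x where x: "x \<in> topspace X" "openin X {x}" by blast
    show "\<exists>S :: ('a \<Rightarrow> real) ring. ring S \<and> CX X \<simeq> RDirProd real_ring S"
      by (rule iso_summand[OF tych x])
  next
    assume "\<exists>S :: ('a \<Rightarrow> real) ring. ring S \<and> CX X \<simeq> RDirProd real_ring S"
    then obtain S :: "('a \<Rightarrow> real) ring" and \<phi> where S: "ring S" and phi: "\<phi> \<in> ring_iso (CX X) (RDirProd real_ring S)"
      unfolding is_ring_iso_def by blast
    show "\<exists>x \<in> topspace X. openin X {x}" by (rule summand_iso[OF tych S phi])
  qed
  have B: "(\<exists>x \<in> topspace X. openin X {x}) \<longleftrightarrow> AG_has_leaf X"
    using isoB tri noleaf by blast
  have C: "(\<exists>x \<in> topspace X. openin X {x}) \<longleftrightarrow> \<not> AG_triangulated X"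
    using isoB tri by blast
  show ?thesis using A B C by blast
qed

end
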